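(* Let $q$ be a prime power, $n\ge 2$, and let $\mathcal{F}=(\mathcal{F}_1,\ldots,\mathcal{F}_r)$ be a flag of type $(t_1,\ldots,t_r)$ on $\mathbb{F}_{q^n}$. Let $\beta\in\mathbb{F}_{q^n}^*$. Then $|\mathrm{Orb}_{\beta}(\mathcal{F}_i)|$ divides $|\mathrm{Orb}_{\beta}(\mathcal{F})|$ for every $1\le i\le r$. In particular, $$\mathrm{lcm}\left\{ |\beta^{q^{t_i}-1}| \ : \ 1\le i\le r\right\} \text{ divides } |\mathrm{Orb}_{\beta}(\mathcal{F})|.$$
   Context: $\mathbb{F}_{q^n}$ is regarded as an $n$-dimensional $\mathbb{F}_q$-vector space. A flag of type $(t_1,\ldots,t_r)$ on $\mathbb{F}_{q^n}$ is a sequence $\mathcal{F}=(\mathcal{F}_1,\ldots,\mathcal{F}_r)$ of $\mathbb{F}_q$-subspaces with $\{0\}\subsetneq\mathcal{F}_1\subsetneq\cdots\subsetneq\mathcal{F}_r\subsetneq\mathbb{F}_{q^n}$ and $\dim_{\mathbb{F}_q}\mathcal{F}_i=t_i$. For $\beta\in\mathbb{F}_{q^n}^*$, $|\beta|$ denotes its multiplicative order; for an $\mathbb{F}_q$-subspace $\mathcal{U}$, $\mathcal{U}\beta=\{u\beta: u\in\mathcal{U}\}$ and $\mathcal{F}\beta=(\mathcal{F}_1\beta,\ldots,\mathcal{F}_r\beta)$. The $\beta$-cyclic orbit codes are $\mathrm{Orb}_\beta(\mathcal{U})=\{\mathcal{U}\beta^j: 0\le j\le|\beta|-1\}$ and $\mathrm{Orb}_\beta(\mathcal{F})=\{\mathcal{F}\beta^j: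 0\le j\le |\beta|-1\}$ (as sets). *)

theory Defs
  imports "HOL-Computational_Algebra.Primes"
begin

text \<open>The ambient field F_{q^n} is a finite field type 'a; F_q is a subfield K of it.\<close>

definition is_subfield :: "'a::field set \<Rightarrow> bool" where
  "is_subfield K \<longleftrightarrow> 0 \<in> K \<and> 1 \<in> K \<and>
     (\<forall>x\<in>K. \<forall>y\<in>K. x + y \<in> K \<and> x * y \<in> K) \<and>
     (\<forall>x\<in>K. - x \<in> K) \<and> (\<forall>x\<in>K. x \<noteq> 0 \<longrightarrow> inverse x \<in> K)"

definition is_subspace :: "'a::field set \<Rightarrow> 'a set \<Rightarrow> bool" where
  "is_subspace K U \<longleftrightarrow> 0 \<in> U \<and> (\<forall>x\<in>U. \<forall>y\<in>U. x + y \<in> U) \<and>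
     (\<forall>c\<in>K. \<forall>x\<in>U. c * x \<in> U)"

definition lin_indep :: "'a::field set \<Rightarrow> 'a set \<Rightarrow> bool" where
  "lin_indep K B \<longleftrightarrow> (\<forall>c. (\<forall>b\<in>B. c b \<in> K) \<and> (\<Sum>b\<in>B. c b * b) = 0 \<longrightarrow> (\<forall>b\<in>B. c b = 0))"

definition lin_span :: "'a::field set \<Rightarrow> 'a set \<Rightarrow> 'a set" where
  "lin_span K B = {\<Sum>b\<in>B. c b * b | c. \<forall>b\<in>B. c b \<in> K}"

definition has_dim :: "'a::field set \<Rightarrow> 'a set \<Rightarrow> nat \<Rightarrow> bool" where
  "has_dim K U t \<longleftrightarrow> is_subspace K U \<and>
     (\<exists>B. finite B \<and> card B = t \<and> B \<subseteq> U \<and> lin_indep K B \<and> lin_span K B = U)"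

text \<open>Flag of type ts (lists indexed from 0): strictly increasing chain of subspaces.\<close>
definition is_flag :: "'a::field set \<Rightarrow> 'a set list \<Rightarrow> nat list \<Rightarrow> bool" where
  "is_flag K F ts \<longleftrightarrow> length F = length ts \<and> length F \<ge> 1 \<and>
     (\<forall>i<length F. has_dim K (F ! i) (ts ! i)) \<and>
     {0} \<subset> F ! 0 \<and>
     (\<forall>i. Suc i < length F \<longrightarrow> F ! i \<subset> F ! Suc i) \<and>
     F ! (length F - 1) \<subset> UNIV"

definition mult_order :: "'a::field \<Rightarrow> nat" where
  "mult_order b = (LEAST k. 0 < k \<and> b ^ k = 1)"

definition scale :: "'a::field set \<Rightarrow> 'a \<Rightarrow> 'a set" where
  "scale U b = (\<lambda>u. u * b) ` U"

definition orb :: "'a::field \<Rightarrow> 'a set \<Rightarrow> 'a set set" where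
  "orb b U = {scale U (b ^ j) | j. j < mult_order b}"

definition orb_flag :: "'a::field \<Rightarrow> 'a set list \<Rightarrow> 'a set list set" where
  "orb_flag b F = {map (\<lambda>U. scale U (b ^ j)) F | j. j < mult_order b}"

end

theory Submission
  imports Defs "HOL-Library.FuncSet"
begin

lemma orbit_period:
  fixes f :: "nat \<Rightarrow> 'b"
  assumes shift: "\<And>a a' b. f a = f a' \<Longrightarrow> f (a+b) = f (a'+b)"
    and per: "f m = f 0" and m: "m > 0"
  defines "d \<equiv> LEAST d. 0 < d \<and> f d = f 0"
  shows "0 < d \<and> f d = f 0 \<and> d dvd m \<and> card (f ` {..<m}) = d \<and> (\<forall>k. f k = f 0 \<longrightarrow> d dvd k)"
proof -
  have dd: "0 < d \<and> f d = f 0" unfolding d_def by (rule LeastI[of _ m]) (use per m in auto)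
  have nl: "\<And>k. 0 < k \<Longrightarrow> k < d \<Longrightarrow> f k \<noteq> f 0" unfolding d_def using not_less_Least by blast
  have md: "f k = f (k mod d)" for k
  proof (induction k rule: less_induct)
    case (less k)
    show ?case
    proof (cases "k < d")
      case True then show ?thesis by simp
    next
      case False
      have "f k = f (d + (k - d))" using False by simp
      also have "\<dots> = f (0 + (k - d))" by (rule shift) (use dd in auto)
      also have "\<dots> = f ((k - d) mod d)" using less[of "k-d"] dd False by simp
      also have "(k - d) mod d = k mod d" using False by (simp add: mod_if)
      finally show ?thesis .
    qed
  qed
  have dv: "d dvd k" if "f k = f 0" for k
  proof (rule ccontr)
    assume "\<not> d dvd k"
    then have a: "0 < k mod d" "k mod d < d" using dd by (auto simp: dvd_eq_mod_eq_0)
    have "f (k mod d) = f 0" using md[of k] that by simp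
    then show False using nl a by blast
  qed
  have dm: "d dvd m" using dv per by blast
  then have "d \<le> m" using m by (simp add: dvd_imp_le)
  have img: "f ` {..<m} = f ` {..<d}"
  proof
    show "f ` {..<m} \<subseteq> f ` {..<d}"
    proof
      fix x assume "x \<in> f ` {..<m}"
      then obtain k where "x = f k" by blast
      then have "x = f (k mod d)" using md by simp
      moreover have "k mod d < d" using dd by simp
      ultimately show "x \<in> f ` {..<d}" by blast
    qed
    show "f ` {..<d} \<subseteq> f ` {..<m}" using \<open>d \<le> m\<close> by auto
  qed
  have inj: "inj_on f {..<d}"
  proof (rule inj_onI, rule ccontr)
    fix i j assume ij: "i \<in> {..<d}" "j \<in> {..<d}" "f i = f j" "i \<noteq> j"
    have key: "f (b - a) = f 0" if "a < b" "b < d" "f a = f b" for a b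
    proof -
      have "f (a + (d - a)) = f (b + (d - a))" by (rule shift) (use that in auto)
      then have "f d = f (d + (b - a))" using that by (simp add: add.commute)
      also have "\<dots> = f (0 + (b - a))" by (rule shift) (use dd in auto)
      finally show ?thesis using dd by simp
    qed
    show False
    proof (cases "i < j")
      case True then show ?thesis using key[of i j] ij nl[of "j - i"] by auto
    next
      case False then have "j < i" using ij by auto
      then show ?thesis using key[of j i] ij nl[of "i - j"] by auto
    qed
  qed
  have "card (f ` {..<m}) = d" unfolding img using card_image[OF inj] by simp
  with dd dm dv show ?thesis by blast
qed

lemma pow_one_exists:
  fixes x :: "'a::{field,finite}"
  assumes "x \<noteq> 0"
  shows "\<exists>k>0. x ^ k = 1"
proof -
  have "\<not> inj (\<lambda>k::nat. x ^ k)"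
  proof
    assume "inj (\<lambda>k::nat. x ^ k)"
    then have "infinite (range (\<lambda>k::nat. x ^ k))"
      using finite_imageD infinite_UNIV_nat by blast
    then show False by simp
  qed
  then obtain i j :: nat where ij: "i \<noteq> j" "x ^ i = x ^ j" unfolding inj_def by blast
  have "\<exists>k>0. x ^ k = 1" if "a < b" "x ^ a = x ^ b" for a b :: nat
  proof -
    have "x ^ b = x ^ (a + (b - a))" using that by simp
    then have "x ^ b = x ^ a * x ^ (b - a)" by (simp only: power_add)
    then have "x ^ (b - a) = 1" using that assms by simp
    then show ?thesis using that by (intro exI[of _ "b - a"]) auto
  qed
  then show ?thesis using ij by (metis linorder_neqE_nat)
qed

lemma mult_order_props:
  fixes x :: "'a::{field,finite}"
  assumes "x \<noteq> 0"
  shows "0 < mult_order x \<and> x ^ mult_order x = 1 \<and> (\<forall>k. x ^ k = 1 \<longrightarrow> mult_order x dvd k)"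
proof -
  obtain k where k: "k > 0" "x ^ k = 1" using pow_one_exists[OF assms] by blast
  have o: "0 < mult_order x \<and> x ^ mult_order x = 1"
    unfolding mult_order_def by (rule LeastI[of _ k]) (use k in auto)
  have nl: "\<And>j. 0 < j \<Longrightarrow> j < mult_order x \<Longrightarrow> x ^ j \<noteq> 1"
    unfolding mult_order_def using not_less_Least by blast
  have "mult_order x dvd j" if "x ^ j = 1" for j
  proof (rule ccontr)
    assume "\<not> mult_order x dvd j"
    then have a: "0 < j mod mult_order x" "j mod mult_order x < mult_order x" using o
      by (auto simp: dvd_eq_mod_eq_0)
    have "x ^ j = x ^ (mult_order x * (j div mult_order x)) * x ^ (j mod mult_order x)"
      by (metis div_mult_mod_eq power_add mult.commute)
    also have "\<dots> = x ^ (j mod mult_order x)" using o by (simp only: power_mult) simp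
    finally show False using nl[OF a] that by simp
  qed
  with o show ?thesis by blast
qed

lemma scale_scale: "scale (scale U x) y = scale U (x * y)"
  unfolding scale_def by (auto simp: image_image mult.assoc)

lemma scale_one: "scale U 1 = U"
  unfolding scale_def by simp

lemma prod_fix:
  fixes \<gamma> :: "'a::field"
  assumes "finite U" "0 \<in> U" "scale U \<gamma> = U" "\<gamma> \<noteq> 0"
  shows "\<gamma> ^ (card U - 1) = 1"
proof -
  define V where "V = U - {0}"
  have fV: "finite V" using assms V_def by simp
  have im: "(\<lambda>u. u * \<gamma>) ` V = V"
  proof -
    have "(\<lambda>u. u * \<gamma>) ` U = U" using assms(3) unfolding scale_def .
    show ?thesis
    proof
      show "(\<lambda>u. u * \<gamma>) ` V \<subseteq> V" using \<open>(\<lambda>u. u * \<gamma>) ` U = U\<close> assms(4) unfolding V_def by auto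
      show "V \<subseteq> (\<lambda>u. u * \<gamma>) ` V"
      proof
        fix x assume x: "x \<in> V"
        then obtain u where u: "u \<in> U" "x = u * \<gamma>" using \<open>(\<lambda>u. u * \<gamma>) ` U = U\<close> unfolding V_def by blast
        then have "u \<noteq> 0" using x unfolding V_def by auto
        then show "x \<in> (\<lambda>u. u * \<gamma>) ` V" using u unfolding V_def by blast
      qed
    qed
  qed
  have inj: "inj_on (\<lambda>u. u * \<gamma>) V" using assms(4) by (auto intro: inj_onI)
  have "prod id V = prod id ((\<lambda>u. u * \<gamma>) ` V)" using im by simp
  also have "\<dots> = prod (\<lambda>u. u * \<gamma>) V" using prod.reindex[OF inj] by simp
  also have "\<dots> = prod id V * \<gamma> ^ card V" by (simp add: prod.distrib)
  finally have e: "prod id V = prod id V * \<gamma> ^ card V" .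
  have "prod id V \<noteq> 0" using fV V_def by (simp add: prod_zero_iff)
  with e have "\<gamma> ^ card V = 1" by simp
  moreover have "card V = card U - 1" using assms V_def by (simp add: card_Diff_singleton)
  ultimately show ?thesis by simp
qed

lemma card_dim:
  fixes K U :: "'a::{field,finite} set"
  assumes "is_subfield K" "has_dim K U t"
  shows "card U = card K ^ t"
proof -
  obtain B where B: "finite B" "card B = t" "B \<subseteq> U" "lin_indep K B" "lin_span K B = U"
    using assms(2) unfolding has_dim_def by blast
  define g where "g c = (\<Sum>b\<in>B. c b * b)" for c :: "'a \<Rightarrow> 'a"
  have img: "g ` (B \<rightarrow>\<^sub>E K) = U"
  proof
    show "g ` (B \<rightarrow>\<^sub>E K) \<subseteq> U" using B(5) unfolding lin_span_def g_def by auto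
    show "U \<subseteq> g ` (B \<rightarrow>\<^sub>E K)"
    proof
      fix u assume "u \<in> U"
      then obtain c where c: "u = (\<Sum>b\<in>B. c b * b)" "\<forall>b\<in>B. c b \<in> K"
        using B(5) unfolding lin_span_def by blast
      have "g (restrict c B) = u" unfolding g_def c by (rule sum.cong) auto
      moreover have "restrict c B \<in> B \<rightarrow>\<^sub>E K" using c by auto
      ultimately show "u \<in> g ` (B \<rightarrow>\<^sub>E K)" by blast
    qed
  qed
  have inj: "inj_on g (B \<rightarrow>\<^sub>E K)"
  proof (rule inj_onI)
    fix c c' assume cc: "c \<in> B \<rightarrow>\<^sub>E K" "c' \<in> B \<rightarrow>\<^sub>E K" "g c = g c'"
    define e where "e b = c b - c' b" for b
    have eK: "\<forall>b\<in>B. e b \<in> K" using cc(1,2) assms(1) unfolding e_def is_subfield_def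
      by (auto simp: PiE_iff) (metis diff_conv_add_uminus)
    have "(\<Sum>b\<in>B. e b * b) = g c - g c'" unfolding g_def e_def
      by (simp add: sum_subtractf algebra_simps)
    then have "(\<Sum>b\<in>B. e b * b) = 0" using cc(3) by simp
    then have "\<forall>b\<in>B. e b = 0" using B(4) eK unfolding lin_indep_def by blast
    then show "c = c'" using cc(1,2) unfolding e_def
      by (intro extensionalityI[of _ B]) (auto simp: PiE_iff)
  qed
  have "card U = card (B \<rightarrow>\<^sub>E K)" using card_image[OF inj] img by simp
  also have "\<dots> = card K ^ t" using B(1,2) by (simp add: card_PiE)
  finally show ?thesis .
qed

theorem proposition3p5:
  fixes K :: "'a::{field,finite} set" and q n :: nat
    and F :: "'a set list" and ts :: "nat list" and \<beta> :: 'a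
  assumes "\<exists>p k. prime p \<and> 0 < k \<and> q = p ^ k"
    and "n \<ge> 2"
    and "card (UNIV :: 'a set) = q ^ n"
    and "is_subfield K" and "card K = q"
    and "is_flag K F ts"
    and "\<beta> \<noteq> 0"
  shows "(\<forall>i<length F. card (orb \<beta> (F ! i)) dvd card (orb_flag \<beta> F)) \<and>
         Lcm {mult_order (\<beta> ^ (q ^ (ts ! i) - 1)) | i. i < length F} dvd card (orb_flag \<beta> F)"
proof -
  define m where "m = mult_order \<beta>"
  have mo: "0 < m" "\<beta> ^ m = 1" using mult_order_props[OF assms(7)] m_def by auto
  define g where "g j = map (\<lambda>U. scale U (\<beta> ^ j)) F" for j
  have g0: "g 0 = F" unfolding g_def by (simp add: scale_one)
  have gs: "g (a + b) = map (\<lambda>U. scale U (\<beta> ^ b)) (g a)" for a b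
    unfolding g_def by (simp add: scale_scale power_add)
  have P: "0 < D \<and> g D = g 0 \<and> D dvd m \<and> card (g ` {..<m}) = D \<and> (\<forall>k. g k = g 0 \<longrightarrow> D dvd k)"
    if "D = (LEAST d. 0 < d \<and> g d = g 0)" for D
    unfolding that by (rule orbit_period) (use gs mo g0 g_def scale_one in auto)
  define D where "D = (LEAST d. 0 < d \<and> g d = g 0)"
  note PD = P[OF D_def]
  have oF: "orb_flag \<beta> F = g ` {..<m}" unfolding orb_flag_def g_def m_def by auto
  have cD: "card (orb_flag \<beta> F) = D" using PD oF by simp
  have part: "card (orb \<beta> (F ! i)) dvd D \<and> mult_order (\<beta> ^ (q ^ (ts ! i) - 1)) dvd D"
    if i: "i < length F" for i
  proof -
    define U where "U = F ! i"
    define f where "f j = scale U (\<beta> ^ j)" for j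
    have f0: "f 0 = U" unfolding f_def by (simp add: scale_one)
    have fs: "f (a + b) = scale (f a) (\<beta> ^ b)" for a b
      unfolding f_def by (simp add: scale_scale power_add)
    define d where "d = (LEAST d. 0 < d \<and> f d = f 0)"
    have Pd: "0 < d \<and> f d = f 0 \<and> d dvd m \<and> card (f ` {..<m}) = d \<and> (\<forall>k. f k = f 0 \<longrightarrow> d dvd k)"
      unfolding d_def by (rule orbit_period) (use fs mo f0 f_def scale_one in auto)
    have oU: "orb \<beta> U = f ` {..<m}" unfolding orb_def f_def m_def by auto
    have "f D = f 0"
    proof -
      have "g D ! i = g 0 ! i" using PD by simp
      then show ?thesis unfolding g_def f_def U_def using i by simp
    qed
    then have dD: "d dvd D" using Pd by blast
    have hd: "has_dim K U (ts ! i)" using assms(6) i unfolding is_flag_def U_def by blast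
    have cU: "card U = q ^ (ts ! i)" using card_dim[OF assms(4) hd] assms(5) by simp
    have z: "0 \<in> U" using hd unfolding has_dim_def is_subspace_def by blast
    have "scale U (\<beta> ^ d) = U" using Pd f0 f_def by simp
    then have "(\<beta> ^ d) ^ (card U - 1) = 1"
      by (intro prod_fix) (use z assms(7) in auto)
    then have "(\<beta> ^ (q ^ (ts ! i) - 1)) ^ d = 1" using cU
      by (simp add: power_mult[symmetric] mult.commute)
    then have "mult_order (\<beta> ^ (q ^ (ts ! i) - 1)) dvd d"
      using mult_order_props[of "\<beta> ^ (q ^ (ts ! i) - 1)"] assms(7) by simp
    then show ?thesis using dD Pd oU U_def dvd_trans by metis
  qed
  show ?thesis
  proof
    show "\<forall>i<length F. card (orb \<beta> (F ! i)) dvd card (orb_flag \<beta> F)" using part cD by simp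
    show "Lcm {mult_order (\<beta> ^ (q ^ (ts ! i) - 1)) | i. i < length F} dvd card (orb_flag \<beta> F)"
      using part cD by (auto intro!: Lcm_least)
  qed
qed

end
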